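(* Let $G=\bigoplus_{i=1}^k\mathbb Z/p^{r_i}\mathbb Z$ and $a\in\mathcal F(G,K)$. Then $\mathrm{CharPoly}_{a,G}=(x-|a|)^{|G|}$. In particular, there exists a nonzero $a$-harmonic function on $G$ if and only if the constant function $1$ on $G$ is $a$-harmonic, if and only if $|a|=0$.
   Context: $K$ is a field of characteristic $p$. $\mathcal F(G,K)$ is the space of functions $G\to K$, $(f*a)(g)=\sum_hf(h)a(g-h)$, $\Delta_af=f*a$; $\mathrm{CharPoly}_{a,G}$ is the monic characteristic polynomial of $\Delta_a$ on $\mathcal F(G,K)$; $f$ is $a$-harmonic if $f*a=0$; $|a|=\sum_{u\in G}a(u)$. *)

theory Defs
  imports "Jordan_Normal_Form.Char_Poly"
begin

text \<open>The group G = (Z/p^{r_1}) + ... + (Z/p^{r_k}), realised concretely as functions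
  g :: nat => nat with 0 <= g i < p^(r i) for i < k and g i = 0 for i >= k.\<close>

definition cyc_grp :: "nat \<Rightarrow> nat \<Rightarrow> (nat \<Rightarrow> nat) \<Rightarrow> (nat \<Rightarrow> nat) set" where
  "cyc_grp p k r = {g. (\<forall>i<k. g i < p ^ r i) \<and> (\<forall>i. k \<le> i \<longrightarrow> g i = 0)}"

definition cyc_sub :: "nat \<Rightarrow> (nat \<Rightarrow> nat) \<Rightarrow> (nat \<Rightarrow> nat) \<Rightarrow> (nat \<Rightarrow> nat) \<Rightarrow> (nat \<Rightarrow> nat)" where
  "cyc_sub p r g h = (\<lambda>i. (g i + p ^ r i - h i mod p ^ r i) mod p ^ r i)"

definition conv :: "(nat \<Rightarrow> nat) set \<Rightarrow> ((nat \<Rightarrow> nat) \<Rightarrow> (nat \<Rightarrow> nat) \<Rightarrow> (nat \<Rightarrow> nat))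
    \<Rightarrow> ((nat \<Rightarrow> nat) \<Rightarrow> 'k::field) \<Rightarrow> ((nat \<Rightarrow> nat) \<Rightarrow> 'k) \<Rightarrow> (nat \<Rightarrow> nat) \<Rightarrow> 'k" where
  "conv G sub f a g = (\<Sum>h\<in>G. f h * a (sub g h))"

definition mass :: "(nat \<Rightarrow> nat) set \<Rightarrow> ((nat \<Rightarrow> nat) \<Rightarrow> 'k::field) \<Rightarrow> 'k" where
  "mass G a = (\<Sum>u\<in>G. a u)"

text \<open>Matrix of Delta_a : f |-> f * a on F(G,K) w.r.t. the basis of indicator functions
  delta_{e 0}, ..., delta_{e (n-1)}, where e enumerates G: entry (i,j) is a(e i - e j).\<close>
definition delta_mat :: "(nat \<Rightarrow> (nat \<Rightarrow> nat)) \<Rightarrow> nat \<Rightarrow> ((nat \<Rightarrow> nat) \<Rightarrow> (nat \<Rightarrow> nat) \<Rightarrow> (nat \<Rightarrow> nat))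
    \<Rightarrow> ((nat \<Rightarrow> nat) \<Rightarrow> 'k::field) \<Rightarrow> 'k mat" where
  "delta_mat e n sub a = mat n n (\<lambda>(i, j). a (sub (e i) (e j)))"

end

theory Submission
  imports Defs "HOL-Library.Poly_Mapping" "HOL-Library.Function_Algebras"
    "HOL-Computational_Algebra.Polynomial_Factorial" "HOL-Computational_Algebra.Primes" "HOL-Number_Theory.Cong"
begin

locale cg =
  fixes p k :: nat and r :: "nat \<Rightarrow> nat" and e :: "nat \<Rightarrow> nat \<Rightarrow> nat"
  assumes p: "prime p"
    and bij: "bij_betw e {0..<card (cyc_grp p k r)} (cyc_grp p k r)"
begin

abbreviation "G \<equiv> cyc_grp p k r"
abbreviation "n \<equiv> card G"

definition red :: "(nat \<Rightarrow> nat) \<Rightarrow> (nat \<Rightarrow> nat)" where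
  "red \<alpha> = (\<lambda>i. if i < k then \<alpha> i mod p ^ r i else 0)"

lemma Ppos: "0 < p ^ m"
  using p prime_gt_0_nat by simp

lemma zero_in: "(\<lambda>_. 0) \<in> G"
  unfolding cyc_grp_def using Ppos by auto

lemma finG: "finite G"
proof (rule ccontr)
  assume "infinite G"
  then have "card G = 0" by simp
  then have "G = {}" using bij unfolding bij_betw_def by auto
  then show False using zero_in by auto
qed

lemma npos: "0 < n"
  using finG zero_in card_gt_0_iff by blast

lemma e_in: "i < n \<Longrightarrow> e i \<in> G"
  using bij unfolding bij_betw_def by auto

lemma e_inj: "i < n \<Longrightarrow> j < n \<Longrightarrow> e i = e j \<longleftrightarrow> i = j"
  using bij unfolding bij_betw_def inj_on_def by auto

lemma e_surj: "x \<in> G \<Longrightarrow> \<exists>i<n. e i = x"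
  using bij unfolding bij_betw_def by force

lemma red_in: "red \<alpha> \<in> G"
  unfolding cyc_grp_def red_def using Ppos by auto

lemma red_id: "x \<in> G \<Longrightarrow> red x = x"
  unfolding cyc_grp_def red_def by (auto simp: fun_eq_iff)

lemma red_red: "red (red x + y) = red (x + y)"
  unfolding red_def by (auto simp: fun_eq_iff mod_add_left_eq)

lemma comp_lemma:
  fixes x y a P :: nat
  assumes "x < P" "y < P"
  shows "((x + P - y mod P) mod P = a mod P) \<longleftrightarrow> x = (y + a) mod P"
proof -
  have P: "0 < P" using assms by auto
  have ym: "y mod P = y" using assms by simp
  have "(x + P - y) mod P = a mod P \<longleftrightarrow> [x + P - y = a] (mod P)" by (simp add: cong_def)
  also have "\<dots> \<longleftrightarrow> [x + P - y + y = a + y] (mod P)"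
    using cong_add_rcancel_nat by blast
  also have "x + P - y + y = x + P" using assms by simp
  also have "[x + P = a + y] (mod P) \<longleftrightarrow> [x = a + y] (mod P)"
    by (simp add: cong_def)
  also have "\<dots> \<longleftrightarrow> x = (y + a) mod P"
    using assms by (simp add: cong_def add.commute)
  finally show ?thesis using ym by simp
qed

lemma sub_red:
  assumes "x \<in> G" "y \<in> G"
  shows "(cyc_sub p r x y = red \<alpha>) \<longleftrightarrow> x = red (y + \<alpha>)"
proof -
  have "(cyc_sub p r x y i = red \<alpha> i) \<longleftrightarrow> x i = red (y + \<alpha>) i" for i
  proof (cases "i < k")
    case True
    then have "x i < p ^ r i" "y i < p ^ r i" using assms unfolding cyc_grp_def by auto
    then show ?thesis using True comp_lemma unfolding cyc_sub_def red_def by simp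
  next
    case False
    then have "x i = 0" "y i = 0" using assms unfolding cyc_grp_def by auto
    then show ?thesis using False unfolding cyc_sub_def red_def by simp
  qed
  then show ?thesis by (auto simp: fun_eq_iff)
qed

lemma sub_in:
  assumes "x \<in> G" "y \<in> G"
  shows "cyc_sub p r x y \<in> G"
  using assms Ppos unfolding cyc_grp_def cyc_sub_def by auto

lemma sub_sub:
  assumes "g \<in> G" "h \<in> G"
  shows "cyc_sub p r g (cyc_sub p r g h) = h"
proof -
  have s: "cyc_sub p r g h \<in> G" using sub_in assms .
  have "cyc_sub p r g h = red (cyc_sub p r g h)" using red_id[OF s] by simp
  then have "g = red (h + cyc_sub p r g h)" using sub_red[OF assms] by blast
  then have "g = red (cyc_sub p r g h + h)" by (simp add: add.commute)
  then have "cyc_sub p r g (cyc_sub p r g h) = red h" using sub_red[OF assms(1) s] by blast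
  then show ?thesis using red_id[OF assms(2)] by simp
qed

lemma red_mult:
  assumes "\<forall>i<k. r i \<le> R"
  shows "red (x + (\<lambda>i. p ^ R * u i)) = red x"
proof -
  have "(x i + p ^ R * u i) mod p ^ r i = x i mod p ^ r i" if "i < k" for i
  proof -
    have "p ^ R = p ^ r i * p ^ (R - r i)" using assms that by (simp flip: power_add)
    then show ?thesis by (simp add: mult.assoc)
  qed
  then show ?thesis unfolding red_def by (auto simp: fun_eq_iff)
qed

definition Phi :: "((nat \<Rightarrow> nat) \<Rightarrow>\<^sub>0 'c::comm_ring_1) \<Rightarrow> 'c mat" where
  "Phi f = mat n n (\<lambda>(i,j). \<Sum>\<alpha>\<in>Poly_Mapping.keys f. if e i = red (e j + \<alpha>) then Poly_Mapping.lookup f \<alpha> else 0)"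

lemma Phi_carrier: "Phi f \<in> carrier_mat n n"
  unfolding Phi_def by simp

lemma Phi_dims[simp]: "dim_row (Phi f) = n" "dim_col (Phi f) = n"
  unfolding Phi_def by simp_all

lemma Phi_alt:
  assumes "finite S" "Poly_Mapping.keys f \<subseteq> S" "i < n" "j < n"
  shows "Phi f $$ (i,j) = (\<Sum>\<alpha>\<in>S. if e i = red (e j + \<alpha>) then Poly_Mapping.lookup f \<alpha> else 0)"
proof -
  have "Phi f $$ (i,j) = (\<Sum>\<alpha>\<in>Poly_Mapping.keys f. if e i = red (e j + \<alpha>) then Poly_Mapping.lookup f \<alpha> else 0)"
    unfolding Phi_def using assms by simp
  also have "\<dots> = (\<Sum>\<alpha>\<in>S. if e i = red (e j + \<alpha>) then Poly_Mapping.lookup f \<alpha> else 0)"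
    by (rule sum.mono_neutral_left) (use assms in \<open>auto simp: in_keys_iff\<close>)
  finally show ?thesis .
qed

lemma Phi_diff: "Phi (f - g) = Phi f - Phi g"
proof (rule eq_matI)
  fix i j assume ij: "i < dim_row (Phi f - Phi g)" "j < dim_col (Phi f - Phi g)"
  then have ij': "i < n" "j < n" by auto
  let ?S = "Poly_Mapping.keys f \<union> Poly_Mapping.keys g"
  have fin: "finite ?S" by simp
  have "Phi (f - g) $$ (i,j) = (\<Sum>\<alpha>\<in>?S. if e i = red (e j + \<alpha>) then Poly_Mapping.lookup (f - g) \<alpha> else 0)"
    by (rule Phi_alt[OF fin keys_diff ij'])
  also have "\<dots> = (\<Sum>\<alpha>\<in>?S. (if e i = red (e j + \<alpha>) then Poly_Mapping.lookup f \<alpha> else 0)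
      - (if e i = red (e j + \<alpha>) then Poly_Mapping.lookup g \<alpha> else 0))"
    by (rule sum.cong) (auto simp: lookup_minus)
  also have "\<dots> = Phi f $$ (i,j) - Phi g $$ (i,j)"
    by (simp add: sum_subtractf Phi_alt[OF fin _ ij'])
  finally show "Phi (f - g) $$ (i,j) = (Phi f - Phi g) $$ (i,j)"
    using ij' by (simp add: Phi_carrier)
qed (auto)

lemma Phi_single:
  assumes "i < n" "j < n"
  shows "Phi (Poly_Mapping.single \<alpha> c) $$ (i,j) = (if e i = red (e j + \<alpha>) then c else 0)"
  by (subst Phi_alt[of "{\<alpha>}"]) (use assms in auto)

lemma Phi_single_0: "Phi (Poly_Mapping.single 0 c) = c \<cdot>\<^sub>m 1\<^sub>m n"
proof (rule eq_matI)
  fix i j assume "i < dim_row (c \<cdot>\<^sub>m 1\<^sub>m n)" "j < dim_col (c \<cdot>\<^sub>m 1\<^sub>m n)"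
  then have ij: "i < n" "j < n" by auto
  show "Phi (Poly_Mapping.single 0 c) $$ (i,j) = (c \<cdot>\<^sub>m 1\<^sub>m n) $$ (i,j)"
    using ij by (simp add: Phi_single red_id e_in e_inj)
qed auto

lemma Phi_one: "Phi (1::(nat \<Rightarrow> nat) \<Rightarrow>\<^sub>0 'c::comm_ring_1) = 1\<^sub>m n"
proof -
  have "(1::'c) \<cdot>\<^sub>m 1\<^sub>m n = 1\<^sub>m n" by (rule eq_matI) auto
  then show ?thesis using Phi_single_0[of "1::'c"] by (simp flip: single_one)
qed

lemma lookup_mult_fin:
  "Poly_Mapping.lookup (f * g) \<gamma> = (\<Sum>\<alpha>\<in>Poly_Mapping.keys f. \<Sum>\<beta>\<in>Poly_Mapping.keys g. if \<gamma> = \<alpha> + \<beta> then Poly_Mapping.lookup f \<alpha> * Poly_Mapping.lookup g \<beta> else 0)"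
proof -
  have inner: "(\<Sum>q. Poly_Mapping.lookup g q when \<gamma> = l + q) = (\<Sum>\<beta>\<in>Poly_Mapping.keys g. Poly_Mapping.lookup g \<beta> when \<gamma> = l + \<beta>)" for l
    by (rule Sum_any.expand_superset) (auto simp: in_keys_iff)
  have "Poly_Mapping.lookup (f * g) \<gamma> = (\<Sum>l. Poly_Mapping.lookup f l * (\<Sum>\<beta>\<in>Poly_Mapping.keys g. Poly_Mapping.lookup g \<beta> when \<gamma> = l + \<beta>))"
    unfolding lookup_mult inner ..
  also have "\<dots> = (\<Sum>l\<in>Poly_Mapping.keys f. Poly_Mapping.lookup f l * (\<Sum>\<beta>\<in>Poly_Mapping.keys g. Poly_Mapping.lookup g \<beta> when \<gamma> = l + \<beta>))"
    by (rule Sum_any.expand_superset) (auto simp: in_keys_iff)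
  also have "\<dots> = (\<Sum>\<alpha>\<in>Poly_Mapping.keys f. \<Sum>\<beta>\<in>Poly_Mapping.keys g. if \<gamma> = \<alpha> + \<beta> then Poly_Mapping.lookup f \<alpha> * Poly_Mapping.lookup g \<beta> else 0)"
    by (auto simp: sum_distrib_left when_def intro!: sum.cong)
  finally show ?thesis .
qed

lemma Phi_mult: "Phi (f * g) = Phi f * Phi g"
proof (rule eq_matI)
  fix i j assume "i < dim_row (Phi f * Phi g)" "j < dim_col (Phi f * Phi g)"
  then have ij: "i < n" "j < n" by auto
  let ?Kf = "Poly_Mapping.keys f" and ?Kg = "Poly_Mapping.keys g"
  let ?S = "(\<lambda>(a,b). a + b) ` (?Kf \<times> ?Kg)"
  have finS: "finite ?S" by simp
  have kS: "Poly_Mapping.keys (f * g) \<subseteq> ?S" using keys_mult by fastforce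
  have "Phi (f * g) $$ (i,j) = (\<Sum>\<gamma>\<in>?S. if e i = red (e j + \<gamma>) then Poly_Mapping.lookup (f * g) \<gamma> else 0)"
    by (rule Phi_alt[OF finS kS ij])
  also have "\<dots> = (\<Sum>\<gamma>\<in>?S. \<Sum>\<alpha>\<in>?Kf. \<Sum>\<beta>\<in>?Kg.
      if \<gamma> = \<alpha> + \<beta> then (if e i = red (e j + (\<alpha> + \<beta>)) then Poly_Mapping.lookup f \<alpha> * Poly_Mapping.lookup g \<beta> else 0) else 0)"
  proof (rule sum.cong[OF refl])
    fix \<gamma> assume "\<gamma> \<in> ?S"
    show "(if e i = red (e j + \<gamma>) then Poly_Mapping.lookup (f * g) \<gamma> else 0) = (\<Sum>\<alpha>\<in>?Kf. \<Sum>\<beta>\<in>?Kg.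
      if \<gamma> = \<alpha> + \<beta> then (if e i = red (e j + (\<alpha> + \<beta>)) then Poly_Mapping.lookup f \<alpha> * Poly_Mapping.lookup g \<beta> else 0) else 0)"
      by (cases "e i = red (e j + \<gamma>)") (auto simp: lookup_mult_fin intro!: sum.cong sum.neutral)
  qed
  also have "\<dots> = (\<Sum>\<alpha>\<in>?Kf. \<Sum>\<beta>\<in>?Kg. \<Sum>\<gamma>\<in>?S.
      if \<gamma> = \<alpha> + \<beta> then (if e i = red (e j + (\<alpha> + \<beta>)) then Poly_Mapping.lookup f \<alpha> * Poly_Mapping.lookup g \<beta> else 0) else 0)"
    by (subst sum.swap, rule sum.cong, simp, rule sum.swap)
  also have "\<dots> = (\<Sum>\<alpha>\<in>?Kf. \<Sum>\<beta>\<in>?Kg.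
      (if e i = red (e j + (\<alpha> + \<beta>)) then Poly_Mapping.lookup f \<alpha> * Poly_Mapping.lookup g \<beta> else 0))"
    by (intro sum.cong refl) (auto simp: sum.delta')
  also have "\<dots> = (\<Sum>l = 0..<n. (\<Sum>\<alpha>\<in>?Kf. if e i = red (e l + \<alpha>) then Poly_Mapping.lookup f \<alpha> else 0)
       * (\<Sum>\<beta>\<in>?Kg. if e l = red (e j + \<beta>) then Poly_Mapping.lookup g \<beta> else 0))"
  proof -
    have "(\<Sum>l = 0..<n. (\<Sum>\<alpha>\<in>?Kf. if e i = red (e l + \<alpha>) then Poly_Mapping.lookup f \<alpha> else 0)
       * (\<Sum>\<beta>\<in>?Kg. if e l = red (e j + \<beta>) then Poly_Mapping.lookup g \<beta> else 0))
      = (\<Sum>\<alpha>\<in>?Kf. \<Sum>\<beta>\<in>?Kg. \<Sum>l = 0..<n. if e l = red (e j + \<beta>) then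
           (if e i = red (e l + \<alpha>) then Poly_Mapping.lookup f \<alpha> * Poly_Mapping.lookup g \<beta> else 0) else 0)"
    proof -
      have "(\<Sum>l = 0..<n. (\<Sum>\<alpha>\<in>?Kf. if e i = red (e l + \<alpha>) then Poly_Mapping.lookup f \<alpha> else 0)
       * (\<Sum>\<beta>\<in>?Kg. if e l = red (e j + \<beta>) then Poly_Mapping.lookup g \<beta> else 0))
        = (\<Sum>l = 0..<n. \<Sum>\<alpha>\<in>?Kf. \<Sum>\<beta>\<in>?Kg. if e l = red (e j + \<beta>) then
           (if e i = red (e l + \<alpha>) then Poly_Mapping.lookup f \<alpha> * Poly_Mapping.lookup g \<beta> else 0) else 0)"
        by (auto simp: sum_product intro!: sum.cong)
      also have "\<dots> = (\<Sum>\<alpha>\<in>?Kf. \<Sum>l = 0..<n. \<Sum>\<beta>\<in>?Kg. if e l = red (e j + \<beta>) then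
           (if e i = red (e l + \<alpha>) then Poly_Mapping.lookup f \<alpha> * Poly_Mapping.lookup g \<beta> else 0) else 0)"
        by (rule sum.swap)
      also have "\<dots> = (\<Sum>\<alpha>\<in>?Kf. \<Sum>\<beta>\<in>?Kg. \<Sum>l = 0..<n. if e l = red (e j + \<beta>) then
           (if e i = red (e l + \<alpha>) then Poly_Mapping.lookup f \<alpha> * Poly_Mapping.lookup g \<beta> else 0) else 0)"
        by (rule sum.cong[OF refl], rule sum.swap)
      finally show ?thesis .
    qed
    also have "\<dots> = (\<Sum>\<alpha>\<in>?Kf. \<Sum>\<beta>\<in>?Kg.
      (if e i = red (e j + (\<alpha> + \<beta>)) then Poly_Mapping.lookup f \<alpha> * Poly_Mapping.lookup g \<beta> else 0))"
    proof (intro sum.cong refl)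
      fix \<alpha> \<beta>
      obtain l0 where l0: "l0 < n" "e l0 = red (e j + \<beta>)" using e_surj[OF red_in] by blast
      have eq: "l < n \<Longrightarrow> e l = red (e j + \<beta>) \<longleftrightarrow> l = l0" for l using l0 e_inj[of l l0] by auto
      have "(\<Sum>l = 0..<n. if e l = red (e j + \<beta>) then
           (if e i = red (e l + \<alpha>) then Poly_Mapping.lookup f \<alpha> * Poly_Mapping.lookup g \<beta> else 0) else 0)
         = (\<Sum>l = 0..<n. if l = l0 then
           (if e i = red (e l0 + \<alpha>) then Poly_Mapping.lookup f \<alpha> * Poly_Mapping.lookup g \<beta> else 0) else 0)"
        by (rule sum.cong) (auto simp: eq)
      also have "\<dots> = (if e i = red (e l0 + \<alpha>) then Poly_Mapping.lookup f \<alpha> * Poly_Mapping.lookup g \<beta> else 0)"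
        using l0 by simp
      also have "red (e l0 + \<alpha>) = red (e j + (\<alpha> + \<beta>))"
        using red_red[of "e j + \<beta>" \<alpha>] l0 by (simp add: ac_simps)
      finally show "(\<Sum>l = 0..<n. if e l = red (e j + \<beta>) then
           (if e i = red (e l + \<alpha>) then Poly_Mapping.lookup f \<alpha> * Poly_Mapping.lookup g \<beta> else 0) else 0)
        = (if e i = red (e j + (\<alpha> + \<beta>)) then Poly_Mapping.lookup f \<alpha> * Poly_Mapping.lookup g \<beta> else 0)" .
    qed
    finally show ?thesis by simp
  qed
  also have "\<dots> = (Phi f * Phi g) $$ (i,j)"
    using ij by (simp add: Phi_def scalar_prod_def)
  finally show "Phi (f * g) $$ (i,j) = (Phi f * Phi g) $$ (i,j)" .
qed auto

lemma Phi_pow: "Phi (f ^ m) = Phi f ^\<^sub>m m"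
proof (induction m)
  case 0 then show ?case by (simp add: Phi_one)
next
  case (Suc m)
  have "f ^ Suc m = f ^ m * f" by (simp add: mult.commute)
  then have "Phi (f ^ Suc m) = Phi (f ^ m * f)" by (rule arg_cong)
  also have "\<dots> = Phi (f ^ m) * Phi f" by (rule Phi_mult)
  also have "\<dots> = Phi f ^\<^sub>m Suc m" using Suc.IH by simp
  finally show ?case .
qed

lemma Phi_sumform:
  assumes T: "finite T" and ij: "i < n" "j < n"
  shows "Phi (\<Sum>u\<in>T. Poly_Mapping.single (\<phi> u) (c u)) $$ (i,j)
       = (\<Sum>u\<in>T. if e i = red (e j + \<phi> u) then (c u :: 'c::comm_ring_1) else 0)"
proof -
  let ?F = "\<Sum>u\<in>T. Poly_Mapping.single (\<phi> u) (c u)"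
  have lk: "Poly_Mapping.lookup ?F \<alpha> = (\<Sum>u\<in>T. if \<phi> u = \<alpha> then c u else 0)" for \<alpha>
    by (simp add: lookup_sum lookup_single when_def)
  have z: "Poly_Mapping.lookup ?F \<alpha> = 0" if "\<alpha> \<notin> \<phi> ` T" for \<alpha>
    unfolding lk by (rule sum.neutral) (use that in auto)
  have ks: "Poly_Mapping.keys ?F \<subseteq> \<phi> ` T"
    using z by (auto simp: in_keys_iff)
  have "Phi ?F $$ (i,j) = (\<Sum>\<alpha>\<in>\<phi> ` T. if e i = red (e j + \<alpha>) then Poly_Mapping.lookup ?F \<alpha> else 0)"
    by (rule Phi_alt[OF finite_imageI[OF T] ks ij])
  also have "\<dots> = (\<Sum>\<alpha>\<in>\<phi> ` T. \<Sum>u\<in>T. if \<phi> u = \<alpha> then (if e i = red (e j + \<phi> u) then c u else 0) else 0)"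
    unfolding lk
  proof (rule sum.cong[OF refl])
    fix \<alpha>
    show "(if e i = red (e j + \<alpha>) then \<Sum>u\<in>T. if \<phi> u = \<alpha> then c u else 0 else 0) =
      (\<Sum>u\<in>T. if \<phi> u = \<alpha> then (if e i = red (e j + \<phi> u) then c u else 0) else 0)"
    proof (cases "e i = red (e j + \<alpha>)")
      case True
      then show ?thesis by (intro trans[OF if_P[OF True]] sum.cong refl) auto
    next
      case False
      then show ?thesis by (intro trans[OF if_not_P[OF False]] sym[OF sum.neutral]) auto
    qed
  qed
  also have "\<dots> = (\<Sum>u\<in>T. \<Sum>\<alpha>\<in>\<phi> ` T. if \<phi> u = \<alpha> then (if e i = red (e j + \<phi> u) then c u else 0) else 0)"
    by (rule sum.swap)
  also have "\<dots> = (\<Sum>u\<in>T. if e i = red (e j + \<phi> u) then c u else 0)"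
    using T by (intro sum.cong refl) (simp add: sum.delta')
  finally show ?thesis .
qed

lemma single_pow: "Poly_Mapping.single u c ^ m = Poly_Mapping.single (\<lambda>i. m * u i) ((c::'c::comm_semiring_1) ^ m)"
proof (induction m)
  case 0
  have "(\<lambda>i. 0 * u i) = 0" by (simp add: fun_eq_iff)
  then show ?case by simp
next
  case (Suc m)
  have "u + (\<lambda>i. m * u i) = (\<lambda>i. Suc m * u i)" by (simp add: fun_eq_iff)
  then show ?case using Suc by (simp add: mult_single)
qed

lemma CHAR_pm: "CHAR((nat \<Rightarrow> nat) \<Rightarrow>\<^sub>0 'c::comm_semiring_1) = CHAR('c)"
proof (rule CHAR_eqI)
  show "of_nat CHAR('c) = (0 :: (nat \<Rightarrow> nat) \<Rightarrow>\<^sub>0 'c)"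
    by (rule poly_mapping_eqI) (simp add: lookup_of_nat)
next
  fix x assume "of_nat x = (0 :: (nat \<Rightarrow> nat) \<Rightarrow>\<^sub>0 'c)"
  then have "Poly_Mapping.lookup (of_nat x :: (nat \<Rightarrow> nat) \<Rightarrow>\<^sub>0 'c) 0 = 0" by simp
  then have "of_nat x = (0::'c)" by (simp add: lookup_of_nat)
  then show "CHAR('c) dvd x" by (simp add: of_nat_eq_0_iff_char_dvd)
qed

definition "qq = p ^ (\<Sum>i<k. r i)"

lemma qq_pos: "0 < qq" unfolding qq_def using Ppos .

lemma main_nil:
  fixes b :: "(nat \<Rightarrow> nat) \<Rightarrow> 'c::comm_ring_1"
  assumes ch: "CHAR('c) = p"
  shows "Phi (((\<Sum>u\<in>G. Poly_Mapping.single u (b u)) - Poly_Mapping.single 0 (\<Sum>u\<in>G. b u)) ^ qq) = 0\<^sub>m n n"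
proof -
  define A where "A = (\<Sum>u\<in>G. Poly_Mapping.single u (b u))"
  define s where "s = (\<Sum>u\<in>G. b u)"
  define C where "C = Poly_Mapping.single (0::nat\<Rightarrow>nat) s"
  have pc: "prime CHAR((nat \<Rightarrow> nat) \<Rightarrow>\<^sub>0 'c)" using CHAR_pm[where 'c='c] ch p by simp
  have pc': "prime CHAR('c)" using ch p by simp
  have qq: "qq = CHAR((nat \<Rightarrow> nat) \<Rightarrow>\<^sub>0 'c) ^ (\<Sum>i<k. r i)" unfolding qq_def CHAR_pm[where 'c='c] ch ..
  have qq': "qq = CHAR('c) ^ (\<Sum>i<k. r i)" unfolding qq_def ch ..
  have "(A - C + C) ^ qq = (A - C) ^ qq + C ^ qq" by (rule freshmans_dream'[OF pc qq])
  then have AC: "(A - C) ^ qq = A ^ qq - C ^ qq" by (simp add: algebra_simps)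
  have Aq: "A ^ qq = (\<Sum>u\<in>G. Poly_Mapping.single (\<lambda>i. qq * u i) (b u ^ qq))"
    unfolding A_def by (subst freshmans_dream_sum'[OF pc qq]) (simp add: single_pow)
  have z: "(\<lambda>i. qq * (0::nat\<Rightarrow>nat) i) = 0" by (simp add: fun_eq_iff)
  have Cq: "C ^ qq = Poly_Mapping.single 0 (s ^ qq)"
    unfolding C_def single_pow z ..
  have Rle: "\<forall>i<k. r i \<le> (\<Sum>i<k. r i)" by (auto intro: member_le_sum)
  have PA: "Phi (A ^ qq) = Phi (C ^ qq)"
  proof (rule eq_matI)
    fix i j assume "i < dim_row (Phi (C ^ qq))" "j < dim_col (Phi (C ^ qq))"
    then have ij: "i < n" "j < n" by auto
    have "Phi (A ^ qq) $$ (i,j) = (\<Sum>u\<in>G. if e i = red (e j + (\<lambda>i. qq * u i)) then b u ^ qq else 0)"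
      unfolding Aq by (rule Phi_sumform[OF finG ij])
    also have "\<dots> = (\<Sum>u\<in>G. if i = j then b u ^ qq else 0)"
      using red_mult[OF Rle] ij by (auto simp: qq_def red_id e_in e_inj intro!: sum.cong)
    also have "\<dots> = (if i = j then s ^ qq else 0)"
      unfolding s_def by (simp add: freshmans_dream_sum'[OF pc' qq'])
    also have "\<dots> = Phi (C ^ qq) $$ (i,j)"
      unfolding Cq using ij by (simp add: Phi_single red_id e_in e_inj)
    finally show "Phi (A ^ qq) $$ (i,j) = Phi (C ^ qq) $$ (i,j)" .
  qed auto
  have "Phi ((A - C) ^ qq) = 0\<^sub>m n n"
    unfolding AC Phi_diff PA by (rule minus_r_inv_mat[OF Phi_carrier])
  then show ?thesis unfolding A_def C_def s_def .
qed


lemma dvd_lin_pow: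
  fixes f g :: "'k::field poly"
  shows "f * g = [:- c, 1:] ^ N \<Longrightarrow> \<exists>d a. f = Polynomial.smult d ([:- c, 1:] ^ a)"
proof (induction N arbitrary: f g)
  case 0
  have f0: "f \<noteq> 0" and g0: "g \<noteq> 0" using 0 by auto
  have "degree (f * g) = 0" using 0 by simp
  then have "degree f = 0" using degree_mult_eq[OF f0 g0] by simp
  then obtain d where "f = [:d:]" by (metis degree_eq_zeroE)
  then have "f = Polynomial.smult d ([:- c, 1:] ^ 0)" by simp
  then show ?case by blast
next
  case (Suc N)
  let ?y = "[:- c, 1:] :: 'k poly"
  have y0: "?y \<noteq> 0" by simp
  have "poly (f * g) c = 0" using Suc.prems by simp
  then have "poly f c = 0 \<or> poly g c = 0" by simp
  then show ?case
  proof
    assume "poly f c = 0"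
    then have "?y dvd f" by (simp add: poly_eq_0_iff_dvd)
    then obtain f' where f': "f = ?y * f'" by (rule dvdE)
    have "?y * (f' * g) = f * g" by (simp only: f' mult.assoc)
    also have "\<dots> = ?y * ?y ^ N" unfolding Suc.prems by (rule power_Suc)
    finally have "?y * (f' * g) = ?y * ?y ^ N" .
    then have "f' * g = ?y ^ N" using mult_left_cancel[OF y0] by blast
    then obtain d a where "f' = Polynomial.smult d (?y ^ a)" using Suc.IH by blast
    then have "f = Polynomial.smult d (?y ^ Suc a)" using f' by (simp add: mult_smult_right)
    then show ?thesis by blast
  next
    assume "poly g c = 0"
    then have "?y dvd g" by (simp add: poly_eq_0_iff_dvd)
    then obtain g' where g': "g = ?y * g'" by (rule dvdE)
    have "?y * (f * g') = f * g" by (simp only: g' ac_simps)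
    also have "\<dots> = ?y * ?y ^ N" unfolding Suc.prems by (rule power_Suc)
    finally have "?y * (f * g') = ?y * ?y ^ N" .
    then have "f * g' = ?y ^ N" using mult_left_cancel[OF y0] by blast
    then show ?thesis using Suc.IH by blast
  qed
qed

lemma char_part:
  fixes a :: "(nat \<Rightarrow> nat) \<Rightarrow> 'k::field"
  assumes ch: "CHAR('k) = p"
  shows "char_poly (delta_mat e n (cyc_sub p r) a) = [:- mass G a, 1:] ^ n"
proof -
  define M where "M = delta_mat e n (cyc_sub p r) a"
  define c where "c = mass G a"
  define b where "b = (\<lambda>u. [:a u:])"
  define A where "A = (\<Sum>u\<in>G. Poly_Mapping.single u (b u))"
  define C where "C = Poly_Mapping.single (0::nat\<Rightarrow>nat) (\<Sum>u\<in>G. b u)"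
  define y where "y = [:- c, 1:]"
  define Y where "Y = Poly_Mapping.single (0::nat\<Rightarrow>nat) y"
  define Z where "Z = A - C"
  define SS where "SS = (\<Sum>i<qq. Z ^ (qq - Suc i) * Y ^ i)"
  have chp: "CHAR('k poly) = p" using ch by simp
  have sb: "(\<Sum>u\<in>G. b u) = [:c:]" unfolding b_def c_def mass_def by (rule sum_to_poly)
  have M: "M \<in> carrier_mat n n" unfolding M_def delta_mat_def by simp
  have nil: "Phi (Z ^ qq) = 0\<^sub>m n n"
    unfolding Z_def A_def C_def by (rule main_nil[OF chp])
  have pd: "Y ^ qq - Z ^ qq = (Y - Z) * SS" unfolding SS_def by (rule power_diff_sumr2)
  have zf: "(\<lambda>i. qq * (0::nat\<Rightarrow>nat) i) = 0" by (simp add: fun_eq_iff)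
  have PY: "Phi (Y ^ qq) = y ^ qq \<cdot>\<^sub>m 1\<^sub>m n"
    unfolding Y_def single_pow zf by (rule Phi_single_0)
  have "Phi (Y ^ qq - Z ^ qq) = y ^ qq \<cdot>\<^sub>m 1\<^sub>m n"
    unfolding Phi_diff PY nil by (rule eq_matI) auto
  then have eq1: "Phi (Y - Z) * Phi SS = y ^ qq \<cdot>\<^sub>m 1\<^sub>m n"
    unfolding pd Phi_mult .
  have X: "Phi (Y - Z) = char_poly_matrix M"
  proof (rule eq_matI)
    fix i j assume "i < dim_row (char_poly_matrix M)" "j < dim_col (char_poly_matrix M)"
    then have ij: "i < n" "j < n" using M char_poly_matrix_closed[OF M] by auto
    have sij: "cyc_sub p r (e i) (e j) \<in> G" using sub_in e_in ij by auto
    have PA: "Phi A $$ (i,j) = [:a (cyc_sub p r (e i) (e j)):]"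
    proof -
      have "Phi A $$ (i,j) = (\<Sum>u\<in>G. if e i = red (e j + u) then b u else 0)"
        unfolding A_def using Phi_sumform[OF finG ij, of "\<lambda>u. u" b] by simp
      also have "\<dots> = (\<Sum>u\<in>G. if u = cyc_sub p r (e i) (e j) then b u else 0)"
      proof (rule sum.cong[OF refl])
        fix u assume u: "u \<in> G"
        have "(e i = red (e j + u)) = (cyc_sub p r (e i) (e j) = red u)"
          using sub_red[OF e_in e_in] ij by simp
        also have "\<dots> = (u = cyc_sub p r (e i) (e j))" using red_id[OF u] by auto
        finally show "(if e i = red (e j + u) then b u else 0) = (if u = cyc_sub p r (e i) (e j) then b u else 0)"
          by simp
      qed
      also have "\<dots> = b (cyc_sub p r (e i) (e j))" using sij finG by (simp add: sum.delta)
      finally show ?thesis unfolding b_def .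
    qed
    have "Phi (Y - Z) $$ (i,j) = Phi Y $$ (i,j) - (Phi A $$ (i,j) - Phi C $$ (i,j))"
      unfolding Z_def Phi_diff using ij by (simp add: Phi_carrier)
    also have "\<dots> = (if i = j then y else 0) - ([:a (cyc_sub p r (e i) (e j)):] - (if i = j then [:c:] else 0))"
      unfolding PA Y_def C_def sb Phi_single_0 using ij by simp
    also have "\<dots> = char_poly_matrix M $$ (i,j)"
      using ij unfolding char_poly_matrix_def M_def delta_mat_def y_def by simp
    finally show "Phi (Y - Z) $$ (i,j) = char_poly_matrix M $$ (i,j)" .
  qed (use char_poly_matrix_closed[OF M] in auto)
  have "det (Phi (Y - Z) * Phi SS) = det (Phi (Y - Z)) * det (Phi SS)"
    by (rule det_mult[OF Phi_carrier Phi_carrier])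
  then have "char_poly M * det (Phi SS) = det (Phi (Y - Z) * Phi SS)"
    unfolding X char_poly_def by simp
  also have "\<dots> = det (y ^ qq \<cdot>\<^sub>m 1\<^sub>m n)" unfolding eq1 ..
  also have "\<dots> = y ^ (qq * n)" by (simp add: power_mult)
  finally have "char_poly M * det (Phi SS) = y ^ (qq * n)" .
  then obtain d m where cm0: "char_poly M = Polynomial.smult d (y ^ m)" unfolding y_def using dvd_lin_pow by blast
  have mc: "degree (char_poly M) = n \<and> coeff (char_poly M) n = 1" using degree_monic_char_poly[OF M] .
  have dy: "degree (y ^ m) = m" "lead_coeff (y ^ m) = 1"
    unfolding y_def by (simp add: degree_linear_power, simp only: lead_coeff_power, simp)
  have d0: "d \<noteq> 0" using cm0 mc by auto
  have "m = n" using mc cm0 dy d0 by simp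
  moreover have "d = 1"
  proof -
    have "coeff (char_poly M) n = d * lead_coeff (y ^ m)" using cm0 dy \<open>m = n\<close> by simp
    then show ?thesis using mc dy by simp
  qed
  ultimately have cm: "char_poly M = y ^ n" using cm0 by simp
  then show ?thesis using cm unfolding M_def y_def c_def by simp
qed

lemma conv_vec:
  fixes a :: "(nat \<Rightarrow> nat) \<Rightarrow> 'k::field"
  assumes i: "i < n"
  shows "conv G (cyc_sub p r) f a (e i) = (delta_mat e n (cyc_sub p r) a *\<^sub>v vec n (\<lambda>j. f (e j))) $ i"
proof -
  have "conv G (cyc_sub p r) f a (e i) = (\<Sum>h\<in>G. f h * a (cyc_sub p r (e i) h))"
    unfolding conv_def ..
  also have "\<dots> = (\<Sum>j\<in>{0..<n}. f (e j) * a (cyc_sub p r (e i) (e j)))"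
    by (rule sum.reindex_bij_betw[OF bij, symmetric])
  also have "\<dots> = (delta_mat e n (cyc_sub p r) a *\<^sub>v vec n (\<lambda>j. f (e j))) $ i"
    using i by (auto simp: delta_mat_def scalar_prod_def mult.commute intro!: sum.cong)
  finally show ?thesis .
qed

lemma conv_one:
  assumes g: "g \<in> G"
  shows "conv G (cyc_sub p r) (\<lambda>_. 1) a g = mass G (a :: (nat \<Rightarrow> nat) \<Rightarrow> 'k::field)"
  unfolding conv_def mass_def
  by (rule sum.reindex_bij_witness[of _ "cyc_sub p r g" "cyc_sub p r g"])
     (use g sub_sub sub_in in auto)

lemma harm:
  fixes a :: "(nat \<Rightarrow> nat) \<Rightarrow> 'k::field"
  assumes ch: "CHAR('k) = p"
  shows "(\<exists>f. (\<exists>g\<in>G. f g \<noteq> 0) \<and> (\<forall>g\<in>G. conv G (cyc_sub p r) f a g = 0)) \<longleftrightarrow> mass G a = 0"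
proof -
  define M where "M = delta_mat e n (cyc_sub p r) a"
  have M: "M \<in> carrier_mat n n" unfolding M_def delta_mat_def by simp
  have "eigenvalue M 0 \<longleftrightarrow> poly (char_poly M) 0 = 0" by (rule eigenvalue_root_char_poly[OF M])
  also have "\<dots> \<longleftrightarrow> mass G a = 0" unfolding M_def char_part[OF ch] using npos by simp
  finally have ev: "eigenvalue M 0 \<longleftrightarrow> mass G a = 0" .
  have "(\<exists>f. (\<exists>g\<in>G. f g \<noteq> 0) \<and> (\<forall>g\<in>G. conv G (cyc_sub p r) f a g = 0)) \<longleftrightarrow> eigenvalue M 0"
  proof
    assume "\<exists>f. (\<exists>g\<in>G. f g \<noteq> 0) \<and> (\<forall>g\<in>G. conv G (cyc_sub p r) f a g = 0)"
    then obtain f g where g: "g \<in> G" "f g \<noteq> 0" and h: "\<forall>g\<in>G. conv G (cyc_sub p r) f a g = 0" by blast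
    obtain j0 where j0: "j0 < n" "e j0 = g" using e_surj[OF g(1)] by blast
    define v where "v = vec n (\<lambda>j. f (e j))"
    have "v \<noteq> 0\<^sub>v n"
    proof
      assume "v = 0\<^sub>v n"
      then have "v $ j0 = 0" using j0 by simp
      then show False using j0 g unfolding v_def by simp
    qed
    moreover have "M *\<^sub>v v = 0 \<cdot>\<^sub>v v"
    proof (rule eq_vecI)
      fix i assume "i < dim_vec (0 \<cdot>\<^sub>v v)"
      then have i: "i < n" unfolding v_def by simp
      have "(M *\<^sub>v v) $ i = conv G (cyc_sub p r) f a (e i)"
        unfolding M_def v_def by (rule conv_vec[OF i, symmetric])
      also have "\<dots> = 0" using h e_in[OF i] by simp
      finally show "(M *\<^sub>v v) $ i = (0 \<cdot>\<^sub>v v) $ i" using i unfolding v_def by simp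
    qed (use M in \<open>auto simp: v_def\<close>)
    ultimately have "eigenvector M v 0" using M unfolding eigenvector_def v_def by auto
    then show "eigenvalue M 0" unfolding eigenvalue_def by blast
  next
    assume "eigenvalue M 0"
    then obtain v where v: "eigenvector M v 0" unfolding eigenvalue_def by blast
    then have vc: "v \<in> carrier_vec n" and vn: "v \<noteq> 0\<^sub>v n" and mv: "M *\<^sub>v v = 0 \<cdot>\<^sub>v v"
      using M unfolding eigenvector_def by auto
    define f where "f = (\<lambda>g. v $ (inv_into {0..<n} e g))"
    have inj: "inj_on e {0..<n}" using bij unfolding bij_betw_def by simp
    have fe: "j < n \<Longrightarrow> f (e j) = v $ j" for j unfolding f_def using inv_into_f_f[OF inj] by simp
    have vv: "vec n (\<lambda>j. f (e j)) = v" using vc fe by (auto intro!: eq_vecI)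
    obtain j where j: "j < n" "v $ j \<noteq> 0"
    proof -
      have "\<exists>j<n. v $ j \<noteq> 0"
      proof (rule ccontr)
        assume "\<not> (\<exists>j<n. v $ j \<noteq> 0)"
        then have "v = 0\<^sub>v n" using vc by (auto intro!: eq_vecI)
        then show False using vn by simp
      qed
      then show ?thesis using that by blast
    qed
    have "\<exists>g\<in>G. f g \<noteq> 0" using j fe e_in by metis
    moreover have "\<forall>g\<in>G. conv G (cyc_sub p r) f a g = 0"
    proof
      fix g assume "g \<in> G"
      then obtain i where i: "i < n" "e i = g" using e_surj by blast
      have "conv G (cyc_sub p r) f a g = (M *\<^sub>v v) $ i"
        using conv_vec[OF i(1), of f a] i vv unfolding M_def by simp
      also have "\<dots> = 0" using mv i vc by simp
      finally show "conv G (cyc_sub p r) f a g = 0" .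
    qed
    ultimately show "\<exists>f. (\<exists>g\<in>G. f g \<noteq> 0) \<and> (\<forall>g\<in>G. conv G (cyc_sub p r) f a g = 0)" by blast
  qed
  then show ?thesis using ev by simp
qed

end

theorem corollary1p3:
  fixes p k :: nat and r :: "nat \<Rightarrow> nat" and a :: "(nat \<Rightarrow> nat) \<Rightarrow> 'k::field"
    and e :: "nat \<Rightarrow> (nat \<Rightarrow> nat)"
  assumes "prime p" and "CHAR('k) = p"
    and "bij_betw e {0..<card (cyc_grp p k r)} (cyc_grp p k r)"
  shows "char_poly (delta_mat e (card (cyc_grp p k r)) (cyc_sub p r) a)
           = [:- mass (cyc_grp p k r) a, 1:] ^ card (cyc_grp p k r)
         \<and> ((\<exists>f. (\<exists>g\<in>cyc_grp p k r. f g \<noteq> 0) \<and>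
              (\<forall>g\<in>cyc_grp p k r. conv (cyc_grp p k r) (cyc_sub p r) f a g = 0))
          \<longleftrightarrow> (\<forall>g\<in>cyc_grp p k r. conv (cyc_grp p k r) (cyc_sub p r) (\<lambda>_. 1) a g = 0))
         \<and> ((\<forall>g\<in>cyc_grp p k r. conv (cyc_grp p k r) (cyc_sub p r) (\<lambda>_. 1) a g = 0)
          \<longleftrightarrow> mass (cyc_grp p k r) a = 0)"
proof -
  interpret cg p k r e using assms(1,3) by unfold_locales
  have c0: "\<forall>g\<in>G. conv G (cyc_sub p r) (\<lambda>_. 1) a g = mass G a"
    using conv_one[where a=a] by blast
  have c1: "(\<forall>g\<in>G. conv G (cyc_sub p r) (\<lambda>_. 1) a g = 0) \<longleftrightarrow> mass G a = 0"
  proof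
    assume "\<forall>g\<in>G. conv G (cyc_sub p r) (\<lambda>_. 1) a g = 0"
    then show "mass G a = 0" using c0 zero_in by metis
  next
    assume "mass G a = 0"
    then show "\<forall>g\<in>G. conv G (cyc_sub p r) (\<lambda>_. 1) a g = 0" using c0 by simp
  qed
  show ?thesis using char_part[OF assms(2)] harm[OF assms(2)] c1 by simp
qed

end
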